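(* Let $q\ge2$ be a prime power and let $\mathcal{S}$ be a regular spread of lines in $\mathrm{PG}(3,q)$. Let $l_1,l_2,l_3$ be three lines of $\mathcal{S}$, let $\mathcal{R}$ be the unique regulus containing them, and let $l_4\in\mathcal{S}\setminus\mathcal{R}$. Then for every ordering $\{i_1,i_2,i_3,i_4\}=\{1,2,3,4\}$, the line $l_{i_4}$ can be obtained from $l_{i_1},l_{i_2},l_{i_3}$ by $(3,1)$-repair, i.e. there exist points $P_j\in l_{i_j}$ ($j=1,2,3$) with $l_{i_4}\subseteq\langle P_1,P_2,P_3\rangle$.
   Context: A spread of $\mathrm{PG}(3,q)$ is a set of $q^2+1$ pairwise skew lines partitioning the points. For three pairwise skew lines, the regulus they determine is the set of $q+1$ lines meeting every transversal line of the three (a transversal being a line meeting all three); a spread is regular if for any three of its lines, the regulus they determine is contained in the spread. *)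

theory Defs
  imports "HOL-Analysis.Analysis"
begin

text \<open>Model of PG(3,q): the underlying vector space is F^4 for a finite field F
  (a type of class field and finite; q = CARD of that type, automatically a prime power \<ge> 2).\<close>

definition pg_point :: "(('a::{field,finite}) ^ 4) set \<Rightarrow> bool" where
  "pg_point P \<longleftrightarrow> vec.subspace P \<and> vec.dim P = 1"

definition pg_line :: "(('a::{field,finite}) ^ 4) set \<Rightarrow> bool" where
  "pg_line l \<longleftrightarrow> vec.subspace l \<and> vec.dim l = 2"

definition pg_meet :: "(('a::{field,finite}) ^ 4) set \<Rightarrow> ('a ^ 4) set \<Rightarrow> bool" where
  "pg_meet U W \<longleftrightarrow> U \<inter> W \<noteq> {0}"

definition skew :: "(('a::{field,finite}) ^ 4) set \<Rightarrow> ('a ^ 4) set \<Rightarrow> bool" where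
  "skew l m \<longleftrightarrow> \<not> pg_meet l m"

definition spread :: "(('a::{field,finite}) ^ 4) set set \<Rightarrow> bool" where
  "spread S \<longleftrightarrow> (\<forall>l\<in>S. pg_line l) \<and> card S = CARD('a)^2 + 1
     \<and> (\<forall>l\<in>S. \<forall>m\<in>S. l \<noteq> m \<longrightarrow> skew l m)
     \<and> (\<forall>P. pg_point P \<longrightarrow> (\<exists>!l\<in>S. P \<subseteq> l))"

definition transversal :: "(('a::{field,finite}) ^ 4) set \<Rightarrow> ('a ^ 4) set \<Rightarrow> ('a ^ 4) set \<Rightarrow> ('a ^ 4) set \<Rightarrow> bool" where
  "transversal t l1 l2 l3 \<longleftrightarrow> pg_line t \<and> pg_meet t l1 \<and> pg_meet t l2 \<and> pg_meet t l3"

definition regulus :: "(('a::{field,finite}) ^ 4) set \<Rightarrow> ('a ^ 4) set \<Rightarrow> ('a ^ 4) set \<Rightarrow> ('a ^ 4) set set" where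
  "regulus l1 l2 l3 = {m. pg_line m \<and> (\<forall>t. transversal t l1 l2 l3 \<longrightarrow> pg_meet m t)}"

definition regular_spread :: "(('a::{field,finite}) ^ 4) set set \<Rightarrow> bool" where
  "regular_spread S \<longleftrightarrow> spread S \<and>
     (\<forall>l1\<in>S. \<forall>l2\<in>S. \<forall>l3\<in>S. l1 \<noteq> l2 \<and> l1 \<noteq> l3 \<and> l2 \<noteq> l3 \<longrightarrow> regulus l1 l2 l3 \<subseteq> S)"

definition repair31 :: "(('a::{field,finite}) ^ 4) set \<Rightarrow> ('a ^ 4) set \<Rightarrow> ('a ^ 4) set \<Rightarrow> ('a ^ 4) set \<Rightarrow> bool" where
  "repair31 l1 l2 l3 l4 \<longleftrightarrow> (\<exists>P1 P2 P3. pg_point P1 \<and> pg_point P2 \<and> pg_point P3 \<and>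
     P1 \<subseteq> l1 \<and> P2 \<subseteq> l2 \<and> P3 \<subseteq> l3 \<and> l4 \<subseteq> vec.span (P1 \<union> P2 \<union> P3))"

end

theory Submission
  imports Defs
begin


lemma sub_eq:
  fixes U W :: "(('a::{field,finite}) ^ 4) set"
  assumes "vec.subspace U" "vec.subspace W" "U \<subseteq> W" "vec.dim W \<le> vec.dim U"
  shows "U = W"
  using vec.dim_eq_span[OF assms(3,4)] assms(1,2) by (metis vec.span_eq_iff)

lemma dim_zero: "vec.dim {0::('a::{field,finite}) ^ 4} = 0"
  by (metis vec.dim_span vec.span_empty vec.dim_empty)

lemma meet_in:
  fixes U W X :: "(('a::{field,finite}) ^ 4) set"
  assumes "vec.subspace U" "vec.subspace W" "vec.subspace X" "U \<subseteq> X" "W \<subseteq> X"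
    "vec.dim X < vec.dim U + vec.dim W"
  shows "\<exists>x. x \<noteq> 0 \<and> x \<in> U \<and> x \<in> W"
proof (rule ccontr)
  assume n: "\<not> ?thesis"
  have "{x + y |x y. x \<in> U \<and> y \<in> W} \<subseteq> X"
    using assms vec.subspace_add by blast
  hence "vec.dim {x + y |x y. x \<in> U \<and> y \<in> W} \<le> vec.dim X" by (rule vec.dim_subset)
  moreover have "U \<inter> W \<subseteq> {0}" using n by blast
  hence "vec.dim (U \<inter> W) \<le> 0" using vec.dim_subset dim_zero by metis
  ultimately show False using vec.dim_sums_Int[OF assms(1,2)] assms(6) by linarith
qed

lemma meet_univ:
  fixes U W :: "(('a::{field,finite}) ^ 4) set"
  assumes "vec.subspace U" "vec.subspace W" "4 < vec.dim U + vec.dim W"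
  shows "\<exists>x. x \<noteq> 0 \<and> x \<in> U \<and> x \<in> W"
  using meet_in[OF assms(1,2) vec.subspace_UNIV] assms(3) dim_subset_UNIV_cart_gen[of "UNIV::('a^4) set"]
  by force

lemma dim_ins:
  fixes S :: "(('a::{field,finite}) ^ 4) set"
  assumes "vec.subspace S" "v \<notin> S"
  shows "vec.dim (vec.span (insert v S)) = vec.dim S + 1"
  using assms by (metis vec.dim_insert vec.dim_span vec.span_eq_iff)

lemma dim_single:
  fixes v :: "('a::{field,finite}) ^ 4"
  assumes "v \<noteq> 0"
  shows "vec.dim (vec.span {v}) = 1"
  using assms by (simp add: vec.dim_insert vec.span_eq_iff)

lemma pt_single:
  fixes v :: "('a::{field,finite}) ^ 4"
  assumes "v \<noteq> 0"
  shows "pg_point (vec.span {v})"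
  using dim_single[OF assms] unfolding pg_point_def by simp


lemma line2:
  fixes v x :: "('a::{field,finite}) ^ 4"
  assumes "vec.subspace e" "x \<in> e" "x \<noteq> 0" "v \<notin> e"
  shows "vec.dim (vec.span {v, x}) = 2"
proof -
  have "vec.span {x} \<subseteq> e" using assms by (simp add: vec.span_minimal)
  hence "v \<notin> vec.span {x}" using assms by blast
  hence "vec.dim {v, x} = vec.dim {x} + 1" by (simp add: vec.dim_insert)
  thus ?thesis using dim_single[OF assms(3)] by simp
qed

lemma uniq_line:
  fixes e f t :: "(('a::{field,finite}) ^ 4) set"
  assumes e: "pg_line e" and f: "pg_line f" and ef: "\<forall>z. z \<in> e \<and> z \<in> f \<longrightarrow> z = 0"
    and ve: "v \<notin> e" and vf: "v \<notin> f" and t: "pg_line t" and vt: "v \<in> t"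
    and x: "x \<in> t" "x \<in> e" "x \<noteq> 0" and y: "y \<in> t" "y \<in> f" "y \<noteq> 0"
  shows "t = vec.span (insert v e) \<inter> vec.span (insert v f)"
proof -
  let ?Pe = "vec.span (insert v e)" and ?Pf = "vec.span (insert v f)"
  have se: "vec.subspace e" "vec.dim e = 2" using e by (auto simp: pg_line_def)
  have sf: "vec.subspace f" "vec.dim f = 2" using f by (auto simp: pg_line_def)
  have st: "vec.subspace t" "vec.dim t = 2" using t by (auto simp: pg_line_def)
  have dPe: "vec.dim ?Pe = 3" using dim_ins[OF se(1) ve] se by simp
  have dPf: "vec.dim ?Pf = 3" using dim_ins[OF sf(1) vf] sf by simp
  have tx: "t = vec.span {v, x}"
    using sub_eq[of "vec.span {v, x}" t] line2[OF se(1) x(2,3) ve] st vt x(1)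
    by (simp add: vec.span_minimal)
  have "vec.span {v, x} \<subseteq> ?Pe" using x(2) by (intro vec.span_mono) auto
  hence tPe: "t \<subseteq> ?Pe" using tx by simp
  have ty: "t = vec.span {v, y}"
    using sub_eq[of "vec.span {v, y}" t] line2[OF sf(1) y(2,3) vf] st vt y(1)
    by (simp add: vec.span_minimal)
  have "vec.span {v, y} \<subseteq> ?Pf" using y(2) by (intro vec.span_mono) auto
  hence tPf: "t \<subseteq> ?Pf" using ty by simp
  have sI: "vec.subspace (?Pe \<inter> ?Pf)" by (simp add: vec.subspace_inter)
  have "vec.dim (?Pe \<inter> ?Pf) \<le> 2"
  proof (rule ccontr)
    assume "\<not> ?thesis"
    hence "?Pe \<inter> ?Pf = ?Pe" "?Pe \<inter> ?Pf = ?Pf"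
      using sub_eq[OF sI, of ?Pe] sub_eq[OF sI, of ?Pf] dPe dPf by auto
    hence eq: "?Pe = ?Pf" by simp
    have "e \<subseteq> ?Pe" "f \<subseteq> ?Pe" using eq vec.span_superset by blast+
    then obtain z where "z \<noteq> 0" "z \<in> e" "z \<in> f"
      using meet_in[OF se(1) sf(1) vec.subspace_span] dPe se sf by force
    thus False using ef by blast
  qed
  thus ?thesis using sub_eq[OF st(1) sI] tPe tPf st by auto
qed


lemma good:
  fixes a b c d :: "(('a::{field,finite}) ^ 4) set"
  assumes a: "pg_line a" and b: "pg_line b" and c: "pg_line c" and d: "pg_line d"
    and ab: "\<forall>z. z \<in> a \<and> z \<in> b \<longrightarrow> z = 0"
    and ad: "\<forall>z. z \<in> a \<and> z \<in> d \<longrightarrow> z = 0"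
    and bd: "\<forall>z. z \<in> b \<and> z \<in> d \<longrightarrow> z = 0"
    and cd: "\<forall>z. z \<in> c \<and> z \<in> d \<longrightarrow> z = 0"
    and v: "v \<in> a" "v \<noteq> 0"
    and H: "\<And>t. pg_line t \<Longrightarrow> v \<in> t \<Longrightarrow> pg_meet t b \<Longrightarrow> pg_meet t c \<Longrightarrow> pg_meet t d \<Longrightarrow> False"
  shows "repair31 a b c d"
proof -
  have sa: "vec.subspace a" "vec.dim a = 2" using a by (auto simp: pg_line_def)
  have sb: "vec.subspace b" "vec.dim b = 2" using b by (auto simp: pg_line_def)
  have sc: "vec.subspace c" "vec.dim c = 2" using c by (auto simp: pg_line_def)
  have sd: "vec.subspace d" "vec.dim d = 2" using d by (auto simp: pg_line_def)
  have vd: "v \<notin> d" using ad v by blast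
  let ?P = "vec.span (insert v d)"
  have dP: "vec.dim ?P = 3" using dim_ins[OF sd(1) vd] sd by simp
  obtain w where w: "w \<noteq> 0" "w \<in> ?P" "w \<in> b"
    using meet_univ[OF vec.subspace_span sb(1), of "insert v d"] dP sb by force
  obtain u where u: "u \<noteq> 0" "u \<in> ?P" "u \<in> c"
    using meet_univ[OF vec.subspace_span sc(1), of "insert v d"] dP sc by force
  let ?T = "vec.span {v, w, u}"
  have vP: "v \<in> ?P" by (simp add: vec.span_base)
  have TP: "?T \<subseteq> ?P" using vP w u by (intro vec.span_minimal) auto
  show ?thesis
  proof (cases "d \<subseteq> ?T")
    case True
    have "d \<subseteq> vec.span (vec.span {v} \<union> vec.span {w} \<union> vec.span {u})"
      using True by (rule order_trans) (intro vec.span_mono, auto intro: vec.span_base)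
    moreover have "vec.span {v} \<subseteq> a" using v sa by (simp add: vec.span_minimal)
    moreover have "vec.span {w} \<subseteq> b" using w sb by (simp add: vec.span_minimal)
    moreover have "vec.span {u} \<subseteq> c" using u sc by (simp add: vec.span_minimal)
    ultimately show ?thesis unfolding repair31_def
      using pt_single[OF v(2)] pt_single[OF w(1)] pt_single[OF u(1)] by blast
  next
    case False
    have dT3: "vec.dim ?T < 3"
    proof (rule ccontr)
      assume "\<not> ?thesis"
      hence "?T = ?P" using sub_eq[OF vec.subspace_span vec.subspace_span TP] dP by simp
      thus False using False vec.span_superset by blast
    qed
    have wa: "w \<notin> a" using ab w by blast
    have "vec.dim (vec.span {w, v}) = 2" using line2[OF sa(1) v wa] .
    moreover have "vec.span {w, v} \<subseteq> ?T" by (intro vec.span_mono) auto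
    ultimately have "vec.dim ?T \<ge> 2" by (metis vec.dim_subset vec.dim_span)
    hence lT: "pg_line ?T" using dT3 by (simp add: pg_line_def)
    obtain z where z: "z \<noteq> 0" "z \<in> ?T" "z \<in> d"
      using meet_in[OF vec.subspace_span sd(1) vec.subspace_span TP] dT3 dP sd
        \<open>vec.dim ?T \<ge> 2\<close> vec.span_superset by force
    have "pg_meet ?T b" unfolding pg_meet_def using w by (auto intro: vec.span_base)
    moreover have "pg_meet ?T c" unfolding pg_meet_def using u by (auto intro: vec.span_base)
    moreover have "pg_meet ?T d" unfolding pg_meet_def using z by auto
    ultimately show ?thesis using H[OF lT] by (auto intro: vec.span_base)
  qed
qed


lemma meet_ex:
  fixes U W :: "(('a::{field,finite}) ^ 4) set"
  assumes "vec.subspace U" "vec.subspace W" "pg_meet U W"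
  shows "\<exists>x. x \<noteq> 0 \<and> x \<in> U \<and> x \<in> W"
  using assms vec.subspace_0 unfolding pg_meet_def by blast

lemma two_trans:
  fixes e f t t0 :: "(('a::{field,finite}) ^ 4) set"
  assumes e: "pg_line e" and f: "pg_line f" and ef: "\<forall>z. z \<in> e \<and> z \<in> f \<longrightarrow> z = 0"
    and ve: "v \<notin> e" and vf: "v \<notin> f"
    and t: "pg_line t" "v \<in> t" "pg_meet t e" "pg_meet t f"
    and t0: "pg_line t0" "v \<in> t0" "pg_meet t0 e" "pg_meet t0 f"
  shows "t = t0"
proof -
  have s: "vec.subspace e" "vec.subspace f" "vec.subspace t" "vec.subspace t0"
    using e f t t0 by (auto simp: pg_line_def)
  obtain x where x: "x \<noteq> 0" "x \<in> t" "x \<in> e" using meet_ex[OF s(3,1) t(3)] by blast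
  obtain y where y: "y \<noteq> 0" "y \<in> t" "y \<in> f" using meet_ex[OF s(3,2) t(4)] by blast
  obtain x' where x': "x' \<noteq> 0" "x' \<in> t0" "x' \<in> e" using meet_ex[OF s(4,1) t0(3)] by blast
  obtain y' where y': "y' \<noteq> 0" "y' \<in> t0" "y' \<in> f" using meet_ex[OF s(4,2) t0(4)] by blast
  show ?thesis
    using uniq_line[OF e f ef ve vf t(1,2) x(2,3,1) y(2,3,1)]
      uniq_line[OF e f ef ve vf t0(1,2) x'(2,3,1) y'(2,3,1)] by simp
qed

definition skw :: "(('a::{field,finite}) ^ 4) set \<Rightarrow> ('a ^ 4) set \<Rightarrow> bool" where
  "skw m n \<longleftrightarrow> (\<forall>z. z \<in> m \<and> z \<in> n \<longrightarrow> z = 0)"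

lemma key:
  fixes a b c d e f g t0 :: "(('a::{field,finite}) ^ 4) set"
  assumes L: "\<forall>m\<in>{a,b,c,d}. pg_line m"
    and SK: "\<forall>m\<in>{a,b,c,d}. \<forall>n\<in>{a,b,c,d}. m \<noteq> n \<longrightarrow> skw m n"
    and D: "distinct [a,b,c,d]"
    and efg: "{e,f,g} = {b,c,d}" "e \<noteq> f"
    and t0: "pg_line t0" "pg_meet t0 a" "pg_meet t0 e" "pg_meet t0 f" "\<not> pg_meet t0 g"
  shows "repair31 a b c d"
proof -
  have s0: "vec.subspace t0" using t0 by (auto simp: pg_line_def)
  have sa: "vec.subspace a" using L by (auto simp: pg_line_def)
  obtain v where v: "v \<noteq> 0" "v \<in> t0" "v \<in> a" using meet_ex[OF s0 sa t0(2)] by blast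
  have sk: "\<And>m n. m \<in> {a,b,c,d} \<Longrightarrow> n \<in> {a,b,c,d} \<Longrightarrow> m \<noteq> n \<Longrightarrow> \<forall>z. z \<in> m \<and> z \<in> n \<longrightarrow> z = 0"
    using SK unfolding skw_def by blast
  show ?thesis
  proof (rule good[OF _ _ _ _ _ _ _ _ v(3,1)])
    show "pg_line a" "pg_line b" "pg_line c" "pg_line d" using L by auto
    show "\<forall>z. z \<in> a \<and> z \<in> b \<longrightarrow> z = 0" "\<forall>z. z \<in> a \<and> z \<in> d \<longrightarrow> z = 0"
      "\<forall>z. z \<in> b \<and> z \<in> d \<longrightarrow> z = 0" "\<forall>z. z \<in> c \<and> z \<in> d \<longrightarrow> z = 0"
      using sk[of a b] sk[of a d] sk[of b d] sk[of c d] D by simp_all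
  next
    fix t assume t: "pg_line t" "v \<in> t" "pg_meet t b" "pg_meet t c" "pg_meet t d"
    have mem0: "e \<in> {b,c,d}" "f \<in> {b,c,d}" "g \<in> {b,c,d}" by (simp_all only: efg(1)[symmetric]) simp_all
    hence mem: "e \<in> {a,b,c,d}" "f \<in> {a,b,c,d}" "g \<in> {a,b,c,d}" by simp_all
    have ea: "e \<noteq> a" "f \<noteq> a" using mem0 D by auto
    have "v \<notin> e" "v \<notin> f" using sk[OF _ mem(1) ea(1)[symmetric]] sk[OF _ mem(2) ea(2)[symmetric]] v
      by auto
    moreover have "pg_line e" "pg_line f" using L mem by auto
    moreover have "\<forall>z. z \<in> e \<and> z \<in> f \<longrightarrow> z = 0" using sk[OF mem(1,2) efg(2)] .
    moreover have "pg_meet t e" "pg_meet t f" "pg_meet t g" using t mem0 by auto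
    ultimately have "t = t0" using two_trans[of e f v t t0] t t0 v by blast
    thus False using \<open>pg_meet t g\<close> t0(5) by simp
  qed
qed

lemma repair_swap: "repair31 a b c d \<Longrightarrow> repair31 b a c d"
  unfolding repair31_def
proof (elim exE conjE)
  fix P1 P2 P3 assume h: "pg_point P1" "pg_point P2" "pg_point P3" "P1 \<subseteq> a" "P2 \<subseteq> b" "P3 \<subseteq> c"
    "d \<subseteq> vec.span (P1 \<union> P2 \<union> P3)"
  have "P1 \<union> P2 \<union> P3 = P2 \<union> P1 \<union> P3" by blast
  thus "\<exists>P1 P2 P3. pg_point P1 \<and> pg_point P2 \<and> pg_point P3 \<and> P1 \<subseteq> b \<and> P2 \<subseteq> a \<and> P3 \<subseteq> c \<and> d \<subseteq> vec.span (P1 \<union> P2 \<union> P3)"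
    using h by metis
qed


theorem mainTheorem3:
  fixes S :: "(('a::{field,finite}) ^ 4) set set"
    and l1 l2 l3 l4 :: "('a ^ 4) set"
  assumes "regular_spread S"
    and "l1 \<in> S" "l2 \<in> S" "l3 \<in> S"
    and "l1 \<noteq> l2" "l1 \<noteq> l3" "l2 \<noteq> l3"
    and "l4 \<in> S - regulus l1 l2 l3"
  shows "\<forall>a b c d. {a, b, c, d} = {l1, l2, l3, l4} \<and> distinct [a, b, c, d]
           \<longrightarrow> repair31 a b c d"
proof -
  have sp: "spread S" using assms(1) by (simp add: regular_spread_def)
  have lines: "\<And>l. l \<in> S \<Longrightarrow> pg_line l" using sp by (simp add: spread_def)
  have skS: "\<And>m n. m \<in> S \<Longrightarrow> n \<in> S \<Longrightarrow> m \<noteq> n \<Longrightarrow> skw m n"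
  proof -
    fix m n assume "m \<in> S" "n \<in> S" "m \<noteq> n"
    hence "skew m n" using sp by (simp add: spread_def)
    thus "skw m n" unfolding skew_def pg_meet_def skw_def by blast
  qed
  have l4S: "l4 \<in> S" and l4R: "l4 \<notin> regulus l1 l2 l3" using assms(8) by auto
  then obtain t0 where t0: "transversal t0 l1 l2 l3" "\<not> pg_meet l4 t0"
    using lines[OF l4S] unfolding regulus_def by blast
  have t0l: "pg_line t0" and m1: "pg_meet t0 l1" and m2: "pg_meet t0 l2" and m3: "pg_meet t0 l3"
    using t0(1) unfolding transversal_def by auto
  have m4: "\<not> pg_meet t0 l4" using t0(2) unfolding pg_meet_def by (simp add: Int_commute)
  have K: "repair31 a b c d" if eq: "{a,b,c,d} = {l1,l2,l3,l4}" and D: "distinct [a,b,c,d]"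
    and al4: "a \<noteq> l4" for a b c d
  proof -
    have inS: "\<forall>m\<in>{a,b,c,d}. m \<in> S" using eq assms(2-4) l4S by simp
    have L: "\<forall>m\<in>{a,b,c,d}. pg_line m" using inS lines by blast
    have SK: "\<forall>m\<in>{a,b,c,d}. \<forall>n\<in>{a,b,c,d}. m \<noteq> n \<longrightarrow> skw m n" using inS skS by blast
    have mt: "\<And>x. x \<in> {a,b,c,d} \<Longrightarrow> x \<noteq> l4 \<Longrightarrow> pg_meet t0 x"
      using eq m1 m2 m3 by auto
    have "l4 \<in> {a,b,c,d}" using eq by simp
    hence "l4 = b \<or> l4 = c \<or> l4 = d" using al4 by auto
    moreover have "pg_meet t0 a" using mt al4 by simp
    ultimately show ?thesis
    proof (elim disjE)
      assume "l4 = b" "pg_meet t0 a"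
      thus ?thesis using key[OF L SK D, of c d b t0] D t0l mt m4 by auto
    next
      assume "l4 = c" "pg_meet t0 a"
      thus ?thesis using key[OF L SK D, of b d c t0] D t0l mt m4 by auto
    next
      assume "l4 = d" "pg_meet t0 a"
      thus ?thesis using key[OF L SK D, of b c d t0] D t0l mt m4 by auto
    qed
  qed
  show ?thesis
  proof (intro allI impI, elim conjE)
    fix a b c d assume eq: "{a,b,c,d} = {l1,l2,l3,l4}" and D: "distinct [a,b,c,d]"
    show "repair31 a b c d"
    proof (cases "a = l4")
      case False thus ?thesis using K eq D by blast
    next
      case True
      have eq': "{b,a,c,d} = {l1,l2,l3,l4}" using eq by (simp add: insert_commute)
      have D': "distinct [b,a,c,d]" using D by auto
      have "b \<noteq> l4" using True D by auto
      thus ?thesis using K[OF eq' D'] repair_swap by blast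
    qed
  qed
qed

end
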